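(* Let $\mathbb{F}$ be $\mathbb{R}$ or $\mathbb{C}$. Let $U,V\in\mathbb{F}(\epsilon)^{r\times n}$, $A_0\in\mathbb{F}(\epsilon)^{r\times r}$, let $X$ be the $n\times n$ diagonal matrix with diagonal entries $x_1,\ldots,x_n$, and let $P=\det(A_0+UXV^T)$. Let $X'$ be the $(2n+r)\times(2n+r)$ diagonal matrix with diagonal entries $x_1,\ldots,x_{2n+r}$. Then there exist $U',V'\in\mathbb{F}(\epsilon)^{(n+r)\times(2n+r)}$ such that: (i) if $Q$ denotes the polynomial in $x_1,\ldots,x_n$ obtained by setting $x_{n+1}=\cdots=x_{2n+r}=1$ in $\det(U'X'V'^T)$, then $P=Q$; (ii) if $\lim_{\epsilon\to0}P$ exists, then $\lim_{\epsilon\to0}\det(U'X'V'^T)$ also exists.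
   Context: $\mathbb{F}(\epsilon)$ is the field of rational functions in the indeterminate $\epsilon$; $x_1,\ldots,x_{2n+r}$ are indeterminates. For a polynomial in the $x_i$ with coefficients in $\mathbb{F}(\epsilon)$, its limit as $\epsilon\to0$ is said to exist if the limit at $\epsilon=0$ of the coefficient of every monomial exists, and the limit is then taken coefficientwise. *)

theory Defs
  imports Complex_Main "HOL-Library.Poly_Mapping" "HOL-Computational_Algebra.Polynomial"
    "HOL-Computational_Algebra.Fraction_Field" "Jordan_Normal_Form.Determinant"
begin

(* F(eps): rational functions in eps over the field 'a, as 'a poly fract.
   Polynomials in x_1, x_2, ... over F(eps): (nat \<Rightarrow>\<^sub>0 nat) \<Rightarrow>\<^sub>0 'a poly fract
   (monomial = exponent vector, variable x_i has index i). *)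

type_synonym 'a rfun = "'a poly fract"
type_synonym 'a mpoly_rf = "(nat \<Rightarrow>\<^sub>0 nat) \<Rightarrow>\<^sub>0 'a rfun"

definition const_mp :: "'a::field rfun \<Rightarrow> 'a mpoly_rf" where
  "const_mp c = Poly_Mapping.single 0 c"

definition var_mp :: "nat \<Rightarrow> 'a::field mpoly_rf" where
  "var_mp i = Poly_Mapping.single (Poly_Mapping.single i 1) 1"

definition lift_mat :: "'a::field rfun mat \<Rightarrow> 'a mpoly_rf mat" where
  "lift_mat A = map_mat const_mp A"

definition diag_var :: "nat \<Rightarrow> 'a::field mpoly_rf mat" where
  "diag_var k = mat k k (\<lambda>(i,j). if i = j then var_mp (i+1) else 0)"

definition restrict_mon :: "nat \<Rightarrow> (nat \<Rightarrow>\<^sub>0 nat) \<Rightarrow> (nat \<Rightarrow>\<^sub>0 nat)" where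
  "restrict_mon n m = (\<Sum>i \<in> Poly_Mapping.keys m \<inter> {1..n}. Poly_Mapping.single i (Poly_Mapping.lookup m i))"

(* substitute x_i := 1 for all i > n (and i = 0, which never occurs) *)
definition subst_one :: "nat \<Rightarrow> 'a::field mpoly_rf \<Rightarrow> 'a mpoly_rf" where
  "subst_one n p = (\<Sum>m \<in> Poly_Mapping.keys p. Poly_Mapping.single (restrict_mon n m) (Poly_Mapping.lookup p m))"

definition rf_lim_exists :: "'a::real_normed_field rfun \<Rightarrow> bool" where
  "rf_lim_exists f \<longleftrightarrow> (\<exists>p q. q \<noteq> 0 \<and> f = Fract p q \<and>
      (\<exists>L. ((\<lambda>e. poly p e / poly q e) \<longlongrightarrow> L) (at 0)))"

definition mp_lim_exists :: "'a::real_normed_field mpoly_rf \<Rightarrow> bool" where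
  "mp_lim_exists P \<longleftrightarrow> (\<forall>m. rf_lim_exists (Poly_Mapping.lookup P m))"

end

theory Submission
  imports Defs
begin

lemma prod_single_pm:
  "finite A \<Longrightarrow> (\<Prod>i\<in>A. Poly_Mapping.single (w i) (c i) :: ('k::comm_monoid_add \<Rightarrow>\<^sub>0 'b::comm_semiring_1))
     = Poly_Mapping.single (\<Sum>i\<in>A. w i) (\<Prod>i\<in>A. c i)"
  by (induct A rule: finite_induct) (simp_all add: mult_single)

lemma det_single_entries:
  fixes A :: "('k::comm_monoid_add \<Rightarrow>\<^sub>0 'b::comm_ring_1) mat"
  assumes "A \<in> carrier_mat N N"
    and "\<And>i k. i < N \<Longrightarrow> k < N \<Longrightarrow> A $$ (i,k) = Poly_Mapping.single (w i k) (c i k)"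
  shows "det A = (\<Sum>p\<in>{p. p permutes {0..<N}}.
     Poly_Mapping.single (\<Sum>i=0..<N. w i (p i)) (signof p * (\<Prod>i=0..<N. c i (p i))))"
proof -
  have "det A = (\<Sum>p\<in>{p. p permutes {0..<N}}. signof p * (\<Prod> i = 0 ..< N. A $$ (i, p i)))"
    using det_def'[OF assms(1)] .
  also have "\<dots> = (\<Sum>p\<in>{p. p permutes {0..<N}}.
     Poly_Mapping.single (\<Sum>i=0..<N. w i (p i)) (signof p * (\<Prod>i=0..<N. c i (p i))))"
  proof (rule sum.cong[OF refl])
    fix p assume "p \<in> {p. p permutes {0..<N}}"
    then have pN: "\<And>i. i < N \<Longrightarrow> p i < N" by (auto simp: permutes_in_image)
    have "(\<Prod> i = 0 ..< N. A $$ (i, p i)) = (\<Prod> i = 0 ..< N. Poly_Mapping.single (w i (p i)) (c i (p i)))"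
      by (rule prod.cong) (auto simp: assms(2) pN)
    also have "\<dots> = Poly_Mapping.single (\<Sum>i=0..<N. w i (p i)) (\<Prod>i=0..<N. c i (p i))"
      by (rule prod_single_pm) simp
    finally have calc: "(\<Prod> i = 0 ..< N. A $$ (i, p i)) = Poly_Mapping.single (\<Sum>i=0..<N. w i (p i)) (\<Prod>i=0..<N. c i (p i))" .
    have so: "(of_int (sign p)::('k \<Rightarrow>\<^sub>0 'b)) = Poly_Mapping.single 0 (of_int (sign p))" by simp
    show "signof p * (\<Prod> i = 0 ..< N. A $$ (i, p i)) = Poly_Mapping.single (\<Sum>i=0..<N. w i (p i)) (signof p * (\<Prod>i=0..<N. c i (p i)))"
      by (simp only: calc so mult_single add_0_left)
  qed
  finally show ?thesis .
qed

lemma lookup_restrict_mon: "Poly_Mapping.lookup (restrict_mon n m) t = (Poly_Mapping.lookup m t when t \<in> {1..n})"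
proof -
  have "Poly_Mapping.lookup (restrict_mon n m) t = (\<Sum>i \<in> Poly_Mapping.keys m \<inter> {1..n}. (Poly_Mapping.lookup m i when i = t))"
    unfolding restrict_mon_def lookup_sum by (simp add: lookup_single)
  also have "\<dots> = (\<Sum>i \<in> Poly_Mapping.keys m \<inter> {1..n}. (if i = t then Poly_Mapping.lookup m i else 0))"
    by (simp add: when_def)
  also have "\<dots> = (if t \<in> Poly_Mapping.keys m \<inter> {1..n} then Poly_Mapping.lookup m t else 0)"
    by (rule sum.delta) simp
  also have "\<dots> = (Poly_Mapping.lookup m t when t \<in> {1..n})"
    by (auto simp: when_def in_keys_iff)
  finally show ?thesis .
qed

lemma lookup_subst_one:
  assumes "finite K" "Poly_Mapping.keys p \<subseteq> K"
  shows "Poly_Mapping.lookup (subst_one n p) m = (\<Sum>k\<in>K. (Poly_Mapping.lookup p k when restrict_mon n k = m))"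
proof -
  have "Poly_Mapping.lookup (subst_one n p) m = (\<Sum>k\<in>Poly_Mapping.keys p. (Poly_Mapping.lookup p k when restrict_mon n k = m))"
    unfolding subst_one_def lookup_sum by (simp add: lookup_single)
  also have "\<dots> = (\<Sum>k\<in>K. (Poly_Mapping.lookup p k when restrict_mon n k = m))"
    by (rule sum.mono_neutral_left) (use assms in \<open>auto simp: in_keys_iff\<close>)
  finally show ?thesis .
qed

lemma subst_one_add: "subst_one n (p + q) = subst_one n p + subst_one n q"
proof (rule poly_mapping_eqI)
  fix m
  define K where "K = Poly_Mapping.keys p \<union> Poly_Mapping.keys q \<union> Poly_Mapping.keys (p + q)"
  have fK: "finite K" unfolding K_def by simp
  show "Poly_Mapping.lookup (subst_one n (p + q)) m = Poly_Mapping.lookup (subst_one n p + subst_one n q) m"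
    unfolding lookup_add
    apply (subst (1 2 3) lookup_subst_one[OF fK])
    apply (auto simp: K_def lookup_add when_def sum.distrib[symmetric] intro!: sum.cong)
    done
qed

lemma subst_one_zero: "subst_one n 0 = 0"
  by (simp add: subst_one_def)

lemma subst_one_single: "subst_one n (Poly_Mapping.single k v) = Poly_Mapping.single (restrict_mon n k) v"
proof (rule poly_mapping_eqI)
  fix m
  show "Poly_Mapping.lookup (subst_one n (Poly_Mapping.single k v)) m = Poly_Mapping.lookup (Poly_Mapping.single (restrict_mon n k) v) m"
    by (subst lookup_subst_one[of "{k}"]) (auto simp: lookup_single when_def)
qed

lemma subst_one_sum: "finite I \<Longrightarrow> subst_one n (\<Sum>i\<in>I. f i) = (\<Sum>i\<in>I. subst_one n (f i))"
  by (induct I rule: finite_induct) (simp_all add: subst_one_zero subst_one_add)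

lemma abstract_part:
  fixes a :: "'i \<Rightarrow> 'b::field rfun"
  assumes fin: "finite I"
    and K1: "\<And>p. p \<in> I \<Longrightarrow> restrict_mon n (mD p) = mP p"
    and K2: "\<And>p q. p \<in> I \<Longrightarrow> q \<in> I \<Longrightarrow> mP p = mP q \<Longrightarrow> mD p = mD q"
  defines "D \<equiv> (\<Sum>p\<in>I. Poly_Mapping.single (mD p) (a p))"
    and "P \<equiv> (\<Sum>p\<in>I. Poly_Mapping.single (mP p) (a p))"
  shows "P = subst_one n D" "\<And>m. Poly_Mapping.lookup D m = 0 \<or> (\<exists>m'. Poly_Mapping.lookup D m = Poly_Mapping.lookup P m')"
proof -
  show "P = subst_one n D"
    unfolding D_def P_def subst_one_sum[OF fin] subst_one_single
    by (rule sum.cong) (auto simp: K1)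
next
  fix m
  have lD: "Poly_Mapping.lookup D m = (\<Sum>p\<in>I. (a p when mD p = m))"
    unfolding D_def lookup_sum by (simp add: lookup_single)
  show "Poly_Mapping.lookup D m = 0 \<or> (\<exists>m'. Poly_Mapping.lookup D m = Poly_Mapping.lookup P m')"
  proof (cases "\<exists>p0\<in>I. mD p0 = m")
    case False
    then have "Poly_Mapping.lookup D m = 0" unfolding lD by (auto simp: when_def intro: sum.neutral)
    then show ?thesis by simp
  next
    case True
    then obtain p0 where p0: "p0 \<in> I" "mD p0 = m" by blast
    have "Poly_Mapping.lookup P (mP p0) = (\<Sum>p\<in>I. (a p when mP p = mP p0))"
      unfolding P_def lookup_sum by (simp add: lookup_single)
    also have "\<dots> = (\<Sum>p\<in>I. (a p when mD p = m))"
    proof (rule sum.cong[OF refl])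
      fix p assume p: "p \<in> I"
      have "mP p = mP p0 \<longleftrightarrow> mD p = m"
        using K1[OF p] K1[OF p0(1)] K2[OF p p0(1)] p0(2) by metis
      then show "(a p when mP p = mP p0) = (a p when mD p = m)" by simp
    qed
    finally show ?thesis unfolding lD by metis
  qed
qed

definition wD :: "nat \<Rightarrow> nat \<Rightarrow> nat \<Rightarrow> nat \<Rightarrow> (nat \<Rightarrow>\<^sub>0 nat)" where
  "wD n r i k = (if k < r then Poly_Mapping.single (n+k+1) 1 else if i < r then Poly_Mapping.single (k-r+1) 1 else Poly_Mapping.single (n+k+1) 1)"

definition wP :: "nat \<Rightarrow> nat \<Rightarrow> nat \<Rightarrow> nat \<Rightarrow> (nat \<Rightarrow>\<^sub>0 nat)" where
  "wP n r i k = (if r \<le> k \<and> i < r then Poly_Mapping.single (k-r+1) 1 else 0)"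

lemma K1:
  assumes p: "p permutes {0..<n+r}"
  shows "restrict_mon n (\<Sum>i=0..<n+r. wD n r i (p i)) = (\<Sum>i=0..<n+r. wP n r i (p i))"
proof (rule poly_mapping_eqI)
  fix t
  have pN: "\<And>i. i < n + r \<Longrightarrow> p i < n + r" using p by (auto simp: permutes_in_image)
  have "Poly_Mapping.lookup (restrict_mon n (\<Sum>i=0..<n+r. wD n r i (p i))) t
     = (if t \<in> {1..n} then (\<Sum>i=0..<n+r. Poly_Mapping.lookup (wD n r i (p i)) t) else 0)"
    by (simp add: lookup_restrict_mon lookup_sum when_def)
  also have "\<dots> = (\<Sum>i=0..<n+r. Poly_Mapping.lookup (wP n r i (p i)) t)"
  proof (cases "t \<in> {1..n}")
    case True
    then show ?thesis
      by (auto intro!: sum.cong simp: wD_def wP_def lookup_single when_def)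
  next
    case False
    have "Poly_Mapping.lookup (wP n r i (p i)) t = 0" if i: "i \<in> {0..<n+r}" for i
    proof -
      have "p i < n + r" using pN i by simp
      then show ?thesis using False by (auto simp: wP_def lookup_single when_def)
    qed
    then have z: "(\<Sum>i=0..<n+r. Poly_Mapping.lookup (wP n r i (p i)) t) = 0" by (intro sum.neutral) blast
    show ?thesis by (simp only: if_not_P[OF False] z)
  qed
  finally show "Poly_Mapping.lookup (restrict_mon n (\<Sum>i=0..<n+r. wD n r i (p i))) t
     = Poly_Mapping.lookup (\<Sum>i=0..<n+r. wP n r i (p i)) t" by (simp add: lookup_sum)
qed

definition eX :: "nat \<Rightarrow> nat \<Rightarrow> nat \<Rightarrow> nat \<Rightarrow> (nat \<Rightarrow>\<^sub>0 nat)" where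
  "eX n r i k = (if r \<le> k \<and> i < r then 0 else Poly_Mapping.single (n+k+1) 1)"

definition sh :: "nat \<Rightarrow> nat \<Rightarrow> nat \<Rightarrow> nat \<Rightarrow> (nat \<Rightarrow>\<^sub>0 nat)" where
  "sh n r i k = (if r \<le> k \<and> i < r then Poly_Mapping.single (n+k+1) 1 else 0)"

lemma K2_aux:
  assumes p: "p permutes {0..<n+r}"
  shows "(\<Sum>i=0..<n+r. wD n r i (p i)) = (\<Sum>i=0..<n+r. wP n r i (p i)) + (\<Sum>i=0..<n+r. eX n r i (p i))"
    and "(\<Sum>i=0..<n+r. eX n r i (p i)) + (\<Sum>i=0..<n+r. sh n r i (p i)) = (\<Sum>k=0..<n+r. Poly_Mapping.single (n+k+1) 1)"
    and "Poly_Mapping.lookup (\<Sum>i=0..<n+r. sh n r i (p i)) t = (if n + r < t then Poly_Mapping.lookup (\<Sum>i=0..<n+r. wP n r i (p i)) (t - (n+r)) else 0)"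
proof -
  have pN: "\<And>i. i < n + r \<Longrightarrow> p i < n + r" using p by (auto simp: permutes_in_image)
  show "(\<Sum>i=0..<n+r. wD n r i (p i)) = (\<Sum>i=0..<n+r. wP n r i (p i)) + (\<Sum>i=0..<n+r. eX n r i (p i))"
    unfolding sum.distrib[symmetric] by (rule sum.cong) (auto simp: wD_def wP_def eX_def)
  have "(\<Sum>i=0..<n+r. eX n r i (p i)) + (\<Sum>i=0..<n+r. sh n r i (p i)) = (\<Sum>i=0..<n+r. Poly_Mapping.single (n+p i+1) 1)"
    unfolding sum.distrib[symmetric] by (rule sum.cong) (auto simp: sh_def eX_def)
  also have "\<dots> = (\<Sum>k=0..<n+r. Poly_Mapping.single (n+k+1) 1)"
    by (rule sum.reindex_bij_betw[where g = "\<lambda>k. Poly_Mapping.single (n+k+1) (1::nat)"]) (rule permutes_imp_bij[OF p])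
  finally show "(\<Sum>i=0..<n+r. eX n r i (p i)) + (\<Sum>i=0..<n+r. sh n r i (p i)) = (\<Sum>k=0..<n+r. Poly_Mapping.single (n+k+1) 1)" .
  have pw: "Poly_Mapping.lookup (sh n r i k) t = (if n + r < t then Poly_Mapping.lookup (wP n r i k) (t - (n+r)) else 0)"
    if "k < n + r" for i k t
    using that by (auto simp: sh_def wP_def lookup_single when_def)
  show "Poly_Mapping.lookup (\<Sum>i=0..<n+r. sh n r i (p i)) t = (if n + r < t then Poly_Mapping.lookup (\<Sum>i=0..<n+r. wP n r i (p i)) (t - (n+r)) else 0)"
  proof (cases "n + r < t")
    case True
    have "(\<Sum>i=0..<n+r. Poly_Mapping.lookup (sh n r i (p i)) t) = (\<Sum>i=0..<n+r. Poly_Mapping.lookup (wP n r i (p i)) (t - (n+r)))"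
      by (rule sum.cong[OF refl]) (simp add: pw pN True)
    then show ?thesis unfolding lookup_sum using True by simp
  next
    case False
    have "(\<Sum>i=0..<n+r. Poly_Mapping.lookup (sh n r i (p i)) t) = 0"
      by (rule sum.neutral) (simp add: pw pN False)
    then show ?thesis unfolding lookup_sum using False by simp
  qed
qed

lemma K2:
  assumes p: "p permutes {0..<n+r}" and q: "q permutes {0..<n+r}"
    and eq: "(\<Sum>i=0..<n+r. wP n r i (p i)) = (\<Sum>i=0..<n+r. wP n r i (q i))"
  shows "(\<Sum>i=0..<n+r. wD n r i (p i)) = (\<Sum>i=0..<n+r. wD n r i (q i))"
proof -
  have Y: "(\<Sum>i=0..<n+r. sh n r i (p i)) = (\<Sum>i=0..<n+r. sh n r i (q i))"
  proof (rule poly_mapping_eqI)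
    fix t
    show "Poly_Mapping.lookup (\<Sum>i=0..<n+r. sh n r i (p i)) t = Poly_Mapping.lookup (\<Sum>i=0..<n+r. sh n r i (q i)) t"
      unfolding K2_aux(3)[OF p] K2_aux(3)[OF q] eq ..
  qed
  have "(\<Sum>i=0..<n+r. eX n r i (p i)) + (\<Sum>i=0..<n+r. sh n r i (q i)) = (\<Sum>i=0..<n+r. eX n r i (q i)) + (\<Sum>i=0..<n+r. sh n r i (q i))"
    unfolding Y[symmetric] K2_aux(2)[OF p] unfolding Y K2_aux(2)[OF q] ..
  then have X: "(\<Sum>i=0..<n+r. eX n r i (p i)) = (\<Sum>i=0..<n+r. eX n r i (q i))"
    by (rule add_right_imp_eq)
  show ?thesis unfolding K2_aux(1)[OF p] K2_aux(1)[OF q] eq X ..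
qed

definition Cm :: "nat \<Rightarrow> 'b::field rfun mat \<Rightarrow> 'b rfun mat \<Rightarrow> nat \<Rightarrow> nat \<Rightarrow> 'b rfun" where
  "Cm r V A0 i k = (if k < r then (if i < r then A0 $$ (i,k) else - V $$ (k, i - r))
                    else (if i < r then 0 else (if i = k then 1 else 0)))"

definition cc :: "nat \<Rightarrow> 'b::field rfun mat \<Rightarrow> 'b rfun mat \<Rightarrow> 'b rfun mat \<Rightarrow> nat \<Rightarrow> nat \<Rightarrow> 'b rfun" where
  "cc r U V A0 i k = (if k < r then (if i < r then A0 $$ (i,k) else - V $$ (k, i - r))
                    else (if i < r then U $$ (i, k - r) else (if i = k then 1 else 0)))"

definition Up :: "nat \<Rightarrow> nat \<Rightarrow> 'b::field rfun mat \<Rightarrow> 'b rfun mat \<Rightarrow> 'b rfun mat \<Rightarrow> 'b rfun mat" where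
  "Up n r U V A0 = mat (n+r) (2*n+r) (\<lambda>(i,l). if l < n then (if i < r then U $$ (i,l) else 0) else Cm r V A0 i (l - n))"

definition Vp :: "nat \<Rightarrow> nat \<Rightarrow> 'b::field rfun mat" where
  "Vp n r = mat (n+r) (2*n+r) (\<lambda>(k,l). if l = n + k \<or> (r \<le> k \<and> l = k - r) then 1 else 0)"

lemma const_var: "const_mp a * var_mp j = Poly_Mapping.single (Poly_Mapping.single j 1) a"
  unfolding const_mp_def var_mp_def by (simp add: mult_single)

lemma mult_diag_var:
  assumes "A \<in> carrier_mat m N" "i < m" "l < N"
  shows "(A * diag_var N) $$ (i,l) = A $$ (i,l) * var_mp (l+1)"
proof -
  have "(A * diag_var N) $$ (i,l) = (\<Sum>k\<in>{0..<N}. A $$ (i,k) * diag_var N $$ (k,l))"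
    using assms by (auto simp: scalar_prod_def diag_var_def intro!: sum.cong)
  also have "\<dots> = (\<Sum>k\<in>{0..<N}. if k = l then A $$ (i,k) * var_mp (k+1) else 0)"
    by (rule sum.cong) (auto simp: diag_var_def assms)
  also have "\<dots> = A $$ (i,l) * var_mp (l+1)"
    using assms by (subst sum.delta) auto
  finally show ?thesis .
qed

lemma entry_D:
  fixes U V A0 :: "'b::field rfun mat"
  assumes i: "i < n + r" and k: "k < n + r"
  shows "(lift_mat (Up n r U V A0) * diag_var (2*n+r) * transpose_mat (lift_mat (Vp n r))) $$ (i,k)
     = Poly_Mapping.single (wD n r i k) (cc r U V A0 i k)"
proof -
  let ?U = "Up n r U V A0" and ?V = "Vp n r :: 'b rfun mat"
  have cU: "lift_mat ?U \<in> carrier_mat (n+r) (2*n+r)" by (simp add: lift_mat_def Up_def)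
  have "(lift_mat ?U * diag_var (2*n+r) * transpose_mat (lift_mat ?V)) $$ (i,k)
     = (\<Sum>l\<in>{0..<2*n+r}. (lift_mat ?U * diag_var (2*n+r)) $$ (i,l) * transpose_mat (lift_mat ?V) $$ (l,k))"
    using i k by (auto simp: scalar_prod_def lift_mat_def Up_def Vp_def diag_var_def intro!: sum.cong)
  also have "\<dots> = (\<Sum>l\<in>{0..<2*n+r}. Poly_Mapping.single (Poly_Mapping.single (l+1) 1) (?U $$ (i,l) * ?V $$ (k,l)))"
  proof (rule sum.cong[OF refl])
    fix l assume l: "l \<in> {0..<2*n+r}"
    show "(lift_mat ?U * diag_var (2*n+r)) $$ (i,l) * transpose_mat (lift_mat ?V) $$ (l,k)
       = Poly_Mapping.single (Poly_Mapping.single (l+1) 1) (?U $$ (i,l) * ?V $$ (k,l))"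
    proof -
      have l': "l < 2*n+r" using l by simp
      have e1: "(lift_mat ?U * diag_var (2*n+r)) $$ (i,l) = lift_mat ?U $$ (i,l) * var_mp (l+1)"
        by (rule mult_diag_var[OF cU i l'])
      have e2: "lift_mat ?U $$ (i,l) = const_mp (?U $$ (i,l))" using i l' by (simp add: lift_mat_def Up_def)
      have e3: "transpose_mat (lift_mat ?V) $$ (l,k) = const_mp (?V $$ (k,l))" using k l' by (simp add: lift_mat_def Vp_def)
      show ?thesis unfolding e1 e2 e3 const_var by (simp add: const_mp_def mult_single)
    qed
  qed
  also have "\<dots> = (\<Sum>l\<in>{0..<2*n+r}.
        (if l = n + k then Poly_Mapping.single (Poly_Mapping.single (n+k+1) 1) (?U $$ (i,n+k)) else 0)
      + (if r \<le> k \<and> l = k - r then Poly_Mapping.single (Poly_Mapping.single (k-r+1) 1) (?U $$ (i,k-r)) else 0))"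
  proof (rule sum.cong[OF refl])
    fix l assume l: "l \<in> {0..<2*n+r}"
    show "Poly_Mapping.single (Poly_Mapping.single (l+1) 1) (?U $$ (i,l) * ?V $$ (k,l)) =
        (if l = n + k then Poly_Mapping.single (Poly_Mapping.single (n+k+1) 1) (?U $$ (i,n+k)) else 0)
      + (if r \<le> k \<and> l = k - r then Poly_Mapping.single (Poly_Mapping.single (k-r+1) 1) (?U $$ (i,k-r)) else 0)"
      using l i k by (auto simp: Vp_def)
  qed
  also have "\<dots> = Poly_Mapping.single (Poly_Mapping.single (n+k+1) 1) (?U $$ (i,n+k))
      + (if r \<le> k then Poly_Mapping.single (Poly_Mapping.single (k-r+1) 1) (?U $$ (i,k-r)) else 0)"
    unfolding sum.distrib using i k by (auto simp: sum.delta)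
  also have "\<dots> = Poly_Mapping.single (wD n r i k) (cc r U V A0 i k)"
    using i k by (auto simp: Up_def Cm_def cc_def wD_def)
  finally show ?thesis .
qed

lemma entry_P:
  fixes U V A0 :: "'b::field rfun mat"
  assumes U: "U \<in> carrier_mat r n" and V: "V \<in> carrier_mat r n" and A0: "A0 \<in> carrier_mat r r"
    and i: "i < r + n" and k: "k < r + n"
  shows "four_block_mat (lift_mat A0) (lift_mat U * diag_var n) (- transpose_mat (lift_mat V)) (1\<^sub>m n) $$ (i,k)
     = Poly_Mapping.single (wP n r i k) (cc r U V A0 i k)"
proof -
  have cU: "lift_mat U \<in> carrier_mat r n" using U by (simp add: lift_mat_def)
  have dims: "dim_row (lift_mat A0) = r" "dim_col (lift_mat A0) = r" "dim_row (1\<^sub>m n :: 'b mpoly_rf mat) = n"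
    "dim_col (1\<^sub>m n :: 'b mpoly_rf mat) = n" using A0 by (auto simp: lift_mat_def)
  have "four_block_mat (lift_mat A0) (lift_mat U * diag_var n) (- transpose_mat (lift_mat V)) (1\<^sub>m n) $$ (i,k)
     = (if i < r then if k < r then lift_mat A0 $$ (i,k) else (lift_mat U * diag_var n) $$ (i,k - r)
        else if k < r then (- transpose_mat (lift_mat V)) $$ (i - r, k) else (1\<^sub>m n) $$ (i - r, k - r))"
    using i k by (subst index_mat_four_block(1)) (auto simp: dims)
  also have "\<dots> = Poly_Mapping.single (wP n r i k) (cc r U V A0 i k)"
  proof (cases "i < r")
    case True
    show ?thesis
    proof (cases "k < r")
      case True
      then show ?thesis using \<open>i < r\<close> A0 by (simp add: lift_mat_def const_mp_def wP_def cc_def)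
    next
      case False
      then have kr: "k - r < n" using k by simp
      have e1: "(lift_mat U * diag_var n) $$ (i,k - r) = lift_mat U $$ (i,k - r) * var_mp (k - r + 1)"
        by (rule mult_diag_var[OF cU \<open>i < r\<close> kr])
      have e2: "lift_mat U $$ (i,k - r) = const_mp (U $$ (i,k - r))" using U \<open>i < r\<close> kr by (simp add: lift_mat_def)
      show ?thesis using False \<open>i < r\<close> unfolding e1 e2 const_var by (simp add: wP_def cc_def)
    qed
  next
    case False
    then have ir: "i - r < n" using i by simp
    show ?thesis
    proof (cases "k < r")
      case True
      then show ?thesis using False ir V by (simp add: lift_mat_def const_mp_def wP_def cc_def single_uminus)
    next
      case kF: False
      then have kr: "k - r < n" using k by simp
      have "(i - r = k - r) = (i = k)" using False kF by auto
      then show ?thesis using False kF ir kr by (simp add: wP_def cc_def)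
    qed
  qed
  finally show ?thesis .
qed

lemma schur:
  fixes A :: "'c::idom mat"
  assumes A: "A \<in> carrier_mat r r" and B: "B \<in> carrier_mat r n" and W: "W \<in> carrier_mat n r"
  shows "det (four_block_mat A B (- W) (1\<^sub>m n)) = det (A + B * W)"
proof -
  let ?S = "A + B * W"
  let ?L = "four_block_mat (1\<^sub>m r) B (0\<^sub>m n r) (1\<^sub>m n)"
  let ?R = "four_block_mat ?S (0\<^sub>m r n) (- W) (1\<^sub>m n)"
  have BW: "B * W \<in> carrier_mat r r" using B W by (rule mult_carrier_mat)
  have S: "?S \<in> carrier_mat r r" using A BW by simp
  have mW: "- W \<in> carrier_mat n r" using W by (rule uminus_carrier_mat)
  have LR: "?L * ?R = four_block_mat (1\<^sub>m r * ?S + B * (- W)) (1\<^sub>m r * 0\<^sub>m r n + B * 1\<^sub>m n)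
     (0\<^sub>m n r * ?S + 1\<^sub>m n * (- W)) (0\<^sub>m n r * 0\<^sub>m r n + 1\<^sub>m n * 1\<^sub>m n)"
    by (rule mult_four_block_mat[OF one_carrier_mat B zero_carrier_mat one_carrier_mat S zero_carrier_mat mW one_carrier_mat])
  have e1: "1\<^sub>m r * ?S + B * (- W) = A"
  proof -
    have "1\<^sub>m r * ?S = ?S" using S by (rule left_mult_one_mat)
    moreover have "B * (- W) = - (B * W)" using B W by (intro uminus_mult_right_mat) auto
    moreover have "?S + - (B * W) = A"
    proof (rule eq_matI)
      fix i j assume ij: "i < dim_row A" "j < dim_col A"
      then have ij': "i < r" "j < r" using A by auto
      have "(?S + - (B * W)) $$ (i,j) = ?S $$ (i,j) + (- (B * W)) $$ (i,j)"
        using ij' S BW by (intro index_add_mat(1)) auto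
      also have "\<dots> = (A $$ (i,j) + (B * W) $$ (i,j)) + (- ((B * W) $$ (i,j)))"
      proof -
        have h1: "(A + B * W) $$ (i,j) = A $$ (i,j) + (B * W) $$ (i,j)" using ij' A BW by (intro index_add_mat(1)) auto
        have h2: "(- (B * W)) $$ (i,j) = - ((B * W) $$ (i,j))" using ij' BW by (intro index_uminus_mat(1)) auto
        show ?thesis unfolding h1 h2 ..
      qed
      also have "\<dots> = A $$ (i,j)" by (simp only: add.assoc right_minus add_0_right)
      finally show "(?S + - (B * W)) $$ (i,j) = A $$ (i,j)" .
    qed (use A BW in auto)
    ultimately show ?thesis by simp
  qed
  have e2: "1\<^sub>m r * 0\<^sub>m r n + B * 1\<^sub>m n = B" using B by simp
  have e3: "0\<^sub>m n r * ?S + 1\<^sub>m n * (- W) = - W"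
    by (simp only: left_mult_zero_mat[OF S] left_mult_one_mat[OF mW] left_add_zero_mat[OF mW])
  have e4: "0\<^sub>m n r * 0\<^sub>m r n + 1\<^sub>m n * 1\<^sub>m n = (1\<^sub>m n :: 'c mat)" by simp
  have cL: "?L \<in> carrier_mat (r + n) (r + n)" using four_block_carrier_mat[OF one_carrier_mat one_carrier_mat] .
  have cR: "?R \<in> carrier_mat (r + n) (r + n)" using four_block_carrier_mat[OF S one_carrier_mat] .
  have "four_block_mat A B (- W) (1\<^sub>m n) = ?L * ?R" unfolding LR e1 e2 e3 e4 ..
  then have "det (four_block_mat A B (- W) (1\<^sub>m n)) = det ?L * det ?R"
    using det_mult[OF cL cR] by simp
  also have "det ?L = 1"
    using det_four_block_mat_lower_left_zero[OF one_carrier_mat B refl one_carrier_mat] by simp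
  also have "det ?R = det ?S"
    using det_four_block_mat_upper_right_zero[OF S refl mW one_carrier_mat] by simp
  finally show ?thesis by simp
qed

lemma rf_lim_exists_zero: "rf_lim_exists (0 :: 'b::real_normed_field rfun)"
  unfolding rf_lim_exists_def
  by (rule exI[of _ 0], rule exI[of _ 1]) (auto simp: Zero_fract_def)

lemma main_generic:
  fixes U V A0 :: "'b::real_normed_field rfun mat"
  assumes U: "U \<in> carrier_mat r n" and V: "V \<in> carrier_mat r n" and A0: "A0 \<in> carrier_mat r r"
  shows "let P = det (lift_mat A0 + lift_mat U * diag_var n * transpose_mat (lift_mat V)) in
       \<exists>U' V'. U' \<in> carrier_mat (n + r) (2 * n + r) \<and> V' \<in> carrier_mat (n + r) (2 * n + r) \<and>
         (let D = det (lift_mat U' * diag_var (2 * n + r) * transpose_mat (lift_mat V')) in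
           P = subst_one n D \<and> (mp_lim_exists P \<longrightarrow> mp_lim_exists D))"
proof -
  define I where "I = {p. p permutes {0..<n+r}}"
  define a where "a p = (signof p * (\<Prod>i=0..<n+r. cc r U V A0 i (p i)) :: 'b rfun)" for p
  define mD where "mD p = (\<Sum>i=0..<n+r. wD n r i (p i))" for p
  define mP where "mP p = (\<Sum>i=0..<n+r. wP n r i (p i))" for p
  let ?U = "Up n r U V A0" and ?V = "Vp n r :: 'b rfun mat"
  let ?DM = "lift_mat ?U * diag_var (2 * n + r) * transpose_mat (lift_mat ?V)"
  let ?P = "det (lift_mat A0 + lift_mat U * diag_var n * transpose_mat (lift_mat V))"
  have fin: "finite I" unfolding I_def by (rule finite_permutations) simp
  have c1: "lift_mat ?U \<in> carrier_mat (n+r) (2*n+r)" by (simp add: lift_mat_def Up_def)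
  have c2: "diag_var (2*n+r) \<in> carrier_mat (2*n+r) (2*n+r)" by (simp add: diag_var_def)
  have c3: "transpose_mat (lift_mat ?V) \<in> carrier_mat (2*n+r) (n+r)" by (simp add: lift_mat_def Vp_def)
  have cDM: "?DM \<in> carrier_mat (n+r) (n+r)" using mult_carrier_mat[OF mult_carrier_mat[OF c1 c2] c3] .
  have D: "det ?DM = (\<Sum>p\<in>I. Poly_Mapping.single (mD p) (a p))"
    unfolding I_def mD_def a_def
    by (rule det_single_entries[OF cDM, where w = "wD n r" and c = "cc r U V A0"]) (rule entry_D)
  let ?FB = "four_block_mat (lift_mat A0) (lift_mat U * diag_var n) (- transpose_mat (lift_mat V)) (1\<^sub>m n)"
  have cA: "lift_mat A0 \<in> carrier_mat r r" using A0 by (simp add: lift_mat_def)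
  have cB: "lift_mat U * diag_var n \<in> carrier_mat r n" using U by (simp add: lift_mat_def diag_var_def)
  have cW: "transpose_mat (lift_mat V) \<in> carrier_mat n r" using V by (simp add: lift_mat_def)
  have P1: "?P = det ?FB" using schur[OF cA cB cW] by (rule sym)
  have rn: "r + n = n + r" by (rule add.commute)
  have cFB: "?FB \<in> carrier_mat (n+r) (n+r)"
    using four_block_carrier_mat[OF cA one_carrier_mat[of n], of "lift_mat U * diag_var n" "- transpose_mat (lift_mat V)"]
    unfolding rn .
  have P2: "det ?FB = (\<Sum>p\<in>I. Poly_Mapping.single (mP p) (a p))"
    unfolding I_def mP_def a_def
    by (rule det_single_entries[OF cFB, where w = "wP n r" and c = "cc r U V A0"]) (rule entry_P[OF U V A0], auto)
  have K1': "\<And>p. p \<in> I \<Longrightarrow> restrict_mon n (mD p) = mP p"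
    unfolding I_def mD_def mP_def using K1 by blast
  have K2': "\<And>p q. p \<in> I \<Longrightarrow> q \<in> I \<Longrightarrow> mP p = mP q \<Longrightarrow> mD p = mD q"
    unfolding I_def mD_def mP_def using K2 by blast
  note AP = abstract_part[where I=I and mD=mD and mP=mP and a=a and n=n, OF fin K1' K2']
  have F1: "?P = subst_one n (det ?DM)" unfolding P1 P2 D by (rule AP(1))
  have F2: "mp_lim_exists ?P \<longrightarrow> mp_lim_exists (det ?DM)"
  proof
    assume L: "mp_lim_exists ?P"
    show "mp_lim_exists (det ?DM)"
      unfolding mp_lim_exists_def
    proof
      fix m
      from AP(2)[of m]
      have c: "Poly_Mapping.lookup (det ?DM) m = 0 \<or> (\<exists>m'. Poly_Mapping.lookup (det ?DM) m = Poly_Mapping.lookup ?P m')"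
        unfolding D P1 P2 .
      show "rf_lim_exists (Poly_Mapping.lookup (det ?DM) m)"
      proof (cases "Poly_Mapping.lookup (det ?DM) m = 0")
        case True
        then show ?thesis by (simp add: rf_lim_exists_zero)
      next
        case False
        with c obtain m' where m': "Poly_Mapping.lookup (det ?DM) m = Poly_Mapping.lookup ?P m'" by blast
        from L have "rf_lim_exists (Poly_Mapping.lookup ?P m')" unfolding mp_lim_exists_def ..
        then show ?thesis unfolding m' .
      qed
    qed
  qed
  have F3: "?U \<in> carrier_mat (n + r) (2 * n + r)" by (simp add: Up_def)
  have F4: "?V \<in> carrier_mat (n + r) (2 * n + r)" by (simp add: Vp_def)
  show ?thesis unfolding Let_def
    apply (rule exI[of _ ?U], rule exI[of _ ?V])
    by (intro conjI) (fact F3, fact F4, fact F1, fact F2)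
qed

theorem lemma12:
  shows "(\<forall>(r::nat) (n::nat) (U::real rfun mat) (V::real rfun mat) (A0::real rfun mat).
      U \<in> carrier_mat r n \<and> V \<in> carrier_mat r n \<and> A0 \<in> carrier_mat r r \<longrightarrow>
      (let P = det (lift_mat A0 + lift_mat U * diag_var n * transpose_mat (lift_mat V)) in
       \<exists>U' V'. U' \<in> carrier_mat (n + r) (2 * n + r) \<and> V' \<in> carrier_mat (n + r) (2 * n + r) \<and>
         (let D = det (lift_mat U' * diag_var (2 * n + r) * transpose_mat (lift_mat V')) in
           P = subst_one n D \<and> (mp_lim_exists P \<longrightarrow> mp_lim_exists D))))
   \<and>
   (\<forall>(r::nat) (n::nat) (U::complex rfun mat) (V::complex rfun mat) (A0::complex rfun mat).
      U \<in> carrier_mat r n \<and> V \<in> carrier_mat r n \<and> A0 \<in> carrier_mat r r \<longrightarrow>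
      (let P = det (lift_mat A0 + lift_mat U * diag_var n * transpose_mat (lift_mat V)) in
       \<exists>U' V'. U' \<in> carrier_mat (n + r) (2 * n + r) \<and> V' \<in> carrier_mat (n + r) (2 * n + r) \<and>
         (let D = det (lift_mat U' * diag_var (2 * n + r) * transpose_mat (lift_mat V')) in
           P = subst_one n D \<and> (mp_lim_exists P \<longrightarrow> mp_lim_exists D))))"
  apply (intro conjI allI impI)
   apply (elim conjE, rule main_generic, assumption+)+
  done

end
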